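(* Let $G$ be a graph with maximum degree $2$ and $k$ a positive integer. If $G$ has no path components with at least $k-1$ vertices and $0<s(G,P_k)\le 2k+1$, then $G$ has exactly one component with more than $k$ vertices, and this component is a cycle with $s(G,P_k)$ vertices.
   Context: $P_k$ is the path with $k$ vertices; $s(G,H)$ is the number of vertex subsets $X\subseteq V(G)$ such that $G[X]$ is isomorphic to $H$. *)

theory Defs
  imports Main
begin

definition graph :: "'a set \<Rightarrow> 'a set set \<Rightarrow> bool" where
  "graph V E \<longleftrightarrow> finite V \<and> (\<forall>e\<in>E. e \<subseteq> V \<and> card e = 2)"

definition degree :: "'a set \<Rightarrow> 'a set set \<Rightarrow> 'a \<Rightarrow> nat" where
  "degree V E v = card {u\<in>V. {u, v} \<in> E}"

definition max_degree :: "'a set \<Rightarrow> 'a set set \<Rightarrow> nat" where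
  "max_degree V E = Max (degree V E ` V)"

definition induced :: "'a set set \<Rightarrow> 'a set \<Rightarrow> 'a set set" where
  "induced E X = {e\<in>E. e \<subseteq> X}"

definition graph_iso :: "'a set \<Rightarrow> 'a set set \<Rightarrow> 'b set \<Rightarrow> 'b set set \<Rightarrow> bool" where
  "graph_iso V1 E1 V2 E2 \<longleftrightarrow>
     (\<exists>f. bij_betw f V1 V2 \<and> (\<forall>x\<in>V1. \<forall>y\<in>V1. {x, y} \<in> E1 \<longleftrightarrow> {f x, f y} \<in> E2))"

definition path_V :: "nat \<Rightarrow> nat set" where
  "path_V k = {0..<k}"
definition path_E :: "nat \<Rightarrow> nat set set" where
  "path_E k = {{i, Suc i} | i. Suc i < k}"
definition cycle_V :: "nat \<Rightarrow> nat set" where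
  "cycle_V n = {0..<n}"
definition cycle_E :: "nat \<Rightarrow> nat set set" where
  "cycle_E n = {{i, (Suc i) mod n} | i. i < n}"

definition s_count :: "'a set \<Rightarrow> 'a set set \<Rightarrow> 'b set \<Rightarrow> 'b set set \<Rightarrow> nat" where
  "s_count V E VH EH = card {X. X \<subseteq> V \<and> graph_iso X (induced E X) VH EH}"

definition adj :: "'a set \<Rightarrow> 'a set set \<Rightarrow> ('a \<times> 'a) set" where
  "adj V E = {(u, v). u \<in> V \<and> v \<in> V \<and> {u, v} \<in> E}"

definition components :: "'a set \<Rightarrow> 'a set set \<Rightarrow> 'a set set" where
  "components V E = {(adj V E)\<^sup>* `` {v} | v. v \<in> V}"

definition is_path_component :: "'a set \<Rightarrow> 'a set set \<Rightarrow> 'a set \<Rightarrow> bool" where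
  "is_path_component V E C \<longleftrightarrow>
     C \<in> components V E \<and> graph_iso C (induced E C) (path_V (card C)) (path_E (card C))"

definition is_cycle_component :: "'a set \<Rightarrow> 'a set set \<Rightarrow> 'a set \<Rightarrow> bool" where
  "is_cycle_component V E C \<longleftrightarrow>
     C \<in> components V E \<and> card C \<ge> 3 \<and>
     graph_iso C (induced E C) (cycle_V (card C)) (cycle_E (card C))"

end

theory Submission
  imports Defs
begin

lemma edge_in_V: "graph V E \<Longrightarrow> {x,y} \<in> E \<Longrightarrow> x \<in> V \<and> y \<in> V"
  unfolding graph_def by blast

lemma edge_neq: "graph V E \<Longrightarrow> {x,y} \<in> E \<Longrightarrow> x \<noteq> y"
  unfolding graph_def by fastforce

lemma deg_le2:
  assumes "graph V E" "max_degree V E = 2" "v \<in> V"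
  shows "degree V E v \<le> 2"
proof -
  have "finite V" using assms(1) unfolding graph_def by simp
  then have "degree V E v \<le> Max (degree V E ` V)" using assms(3) by (simp add: Max_ge)
  then show ?thesis using assms(2) unfolding max_degree_def by simp
qed

lemma no_three:
  assumes "graph V E" "max_degree V E = 2" "v \<in> V"
    and "{a,v} \<in> E" "{b,v} \<in> E" "{c,v} \<in> E" "a \<noteq> b" "a \<noteq> c" "b \<noteq> c"
  shows False
proof -
  have fin: "finite V" using assms(1) unfolding graph_def by simp
  have "a \<in> V" "b \<in> V" "c \<in> V" using edge_in_V[OF assms(1)] assms(4-6) by blast+
  then have "{a,b,c} \<subseteq> {u\<in>V. {u, v} \<in> E}" using assms(4-6) by blast
  then have "card {a,b,c} \<le> card {u\<in>V. {u, v} \<in> E}" using fin by (intro card_mono) auto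
  then have "3 \<le> degree V E v" using assms unfolding degree_def by simp
  then show False using deg_le2[OF assms(1-3)] by simp
qed

lemma path_E_iff: "s < k \<Longrightarrow> t < k \<Longrightarrow> {s,t} \<in> path_E k \<longleftrightarrow> (t = Suc s \<or> s = Suc t)"
  unfolding path_E_def by (auto simp: doubleton_eq_iff)

lemma cycle_E_iff: "i < n \<Longrightarrow> j < n \<Longrightarrow> {i,j} \<in> cycle_E n \<longleftrightarrow> (j = Suc i mod n \<or> i = Suc j mod n)"
  unfolding cycle_E_def by (auto simp: doubleton_eq_iff)

lemma suc_mod_inj: "x < n \<Longrightarrow> y < n \<Longrightarrow> Suc x mod n = Suc y mod n \<Longrightarrow> x = y"
  by (cases "Suc x = n"; cases "Suc y = n") auto

lemma add_mod_cancel: "(a::nat) < n \<Longrightarrow> b < n \<Longrightarrow> (j + a) mod n = (j + b) mod n \<longleftrightarrow> a = b"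
proof
  assume h: "a < n" "b < n" "(j + a) mod n = (j + b) mod n"
  { fix a b :: nat assume h: "a < n" "b < n" "(j + a) mod n = (j + b) mod n" "a \<le> b"
    then have "n dvd (j+b) - (j+a)" using mod_eq_dvd_iff_nat by (metis add_le_cancel_left)
    then have "n dvd b - a" by simp
    moreover have "b - a < n" using h by linarith
    ultimately have "b - a = 0" by (meson nat_dvd_not_less not_gr_zero)
    then have "a = b" using h by linarith
  }
  then show "a = b" using h by (metis nle_le)
qed simp


lemma cyc_rel_iff: "i < n \<Longrightarrow> j < n \<Longrightarrow> 3 \<le> n \<Longrightarrow>
   (j = Suc i mod n \<or> i = Suc j mod n) \<longleftrightarrow> (j = Suc i \<or> i = Suc j \<or> {i,j} = {0, n-1})"
  by (cases "Suc i = n"; cases "Suc j = n") (auto simp: doubleton_eq_iff)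

lemma iso_build:
  assumes "bij_betw g A X" "\<forall>s\<in>A. \<forall>t\<in>A. {g s, g t} \<in> E \<longleftrightarrow> {s,t} \<in> EH"
  shows "graph_iso X (induced E X) A EH"
  unfolding graph_iso_def
proof (intro exI conjI ballI)
  show "bij_betw (inv_into A g) X A" using assms(1) by (rule bij_betw_inv_into)
  fix x y assume xy: "x \<in> X" "y \<in> X"
  have 1: "inv_into A g x \<in> A" "inv_into A g y \<in> A" "g (inv_into A g x) = x" "g (inv_into A g y) = y"
    using assms(1) xy by (auto simp: bij_betw_def inv_into_into f_inv_into_f)
  have "{x,y} \<in> induced E X \<longleftrightarrow> {x,y} \<in> E" using xy unfolding induced_def by auto
  also have "\<dots> \<longleftrightarrow> {inv_into A g x, inv_into A g y} \<in> EH" using assms(2) 1 by metis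
  finally show "{x,y} \<in> induced E X \<longleftrightarrow> {inv_into A g x, inv_into A g y} \<in> EH" .
qed

lemma iso_unpack:
  assumes "graph_iso X (induced E X) (path_V k) (path_E k)"
  shows "\<exists>g. bij_betw g {0..<k} X \<and> (\<forall>s<k. \<forall>t<k. {g s, g t} \<in> E \<longleftrightarrow> (t = Suc s \<or> s = Suc t))"
proof -
  obtain f where f: "bij_betw f X {0..<k}" "\<forall>x\<in>X. \<forall>y\<in>X. {x, y} \<in> induced E X \<longleftrightarrow> {f x, f y} \<in> path_E k"
    using assms unfolding graph_iso_def path_V_def by blast
  define g where "g = inv_into X f"
  have gb: "bij_betw g {0..<k} X" unfolding g_def using f(1) by (rule bij_betw_inv_into)
  show ?thesis
  proof (intro exI conjI allI impI)
    show "bij_betw g {0..<k} X" by (rule gb)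
    fix s t assume st: "s < k" "t < k"
    have 1: "g s \<in> X" "g t \<in> X" "f (g s) = s" "f (g t) = t"
      using gb f(1) st unfolding g_def by (auto simp: bij_betw_def f_inv_into_f bij_betw_inv_into_right)
    have "{g s, g t} \<in> E \<longleftrightarrow> {g s, g t} \<in> induced E X" using 1 unfolding induced_def by auto
    also have "\<dots> \<longleftrightarrow> {s, t} \<in> path_E k" using f(2) 1 by metis
    also have "\<dots> \<longleftrightarrow> (t = Suc s \<or> s = Suc t)" using st by (rule path_E_iff)
    finally show "{g s, g t} \<in> E \<longleftrightarrow> (t = Suc s \<or> s = Suc t)" .
  qed
qed

lemma adj_sym: "sym (adj V E)"
  unfolding sym_def adj_def by (auto simp: insert_commute)

lemma comp_rep:
  assumes "C \<in> components V E" "v \<in> C"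
  shows "C = (adj V E)\<^sup>* `` {v}"
proof -
  obtain u where u: "C = (adj V E)\<^sup>* `` {u}" using assms(1) unfolding components_def by blast
  have uv: "(u,v) \<in> (adj V E)\<^sup>*" using u assms(2) by blast
  have s: "sym ((adj V E)\<^sup>*)" using adj_sym by (rule sym_rtrancl)
  have vu: "(v,u) \<in> (adj V E)\<^sup>*" using uv s by (meson symD)
  show ?thesis
  proof
    show "C \<subseteq> (adj V E)\<^sup>* `` {v}"
    proof
      fix x assume "x \<in> C"
      then have "(u,x) \<in> (adj V E)\<^sup>*" using u by blast
      then have "(v,x) \<in> (adj V E)\<^sup>*" using vu by (rule rtrancl_trans[rotated])
      then show "x \<in> (adj V E)\<^sup>* `` {v}" by blast
    qed
    show "(adj V E)\<^sup>* `` {v} \<subseteq> C"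
    proof
      fix x assume "x \<in> (adj V E)\<^sup>* `` {v}"
      then have "(v,x) \<in> (adj V E)\<^sup>*" by blast
      then have "(u,x) \<in> (adj V E)\<^sup>*" using uv by (rule rtrancl_trans[rotated])
      then show "x \<in> C" using u by blast
    qed
  qed
qed

lemma comp_sub:
  assumes "C \<in> components V E" shows "C \<subseteq> V"
proof
  fix x assume x: "x \<in> C"
  obtain u where u: "C = (adj V E)\<^sup>* `` {u}" "u \<in> V" using assms(1) unfolding components_def by blast
  have "(u,x) \<in> (adj V E)\<^sup>*" using u x by blast
  then show "x \<in> V"
  proof (induction rule: rtrancl_induct)
    case base then show ?case using u(2) .
  next
    case (step y z) then show ?case unfolding adj_def by simp
  qed
qed

lemma comp_self: assumes v: "v \<in> V" shows "(adj V E)\<^sup>* `` {v} \<in> components V E \<and> v \<in> (adj V E)\<^sup>* `` {v}"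
proof
  show "(adj V E)\<^sup>* `` {v} \<in> components V E" unfolding components_def mem_Collect_eq using v by blast
  show "v \<in> (adj V E)\<^sup>* `` {v}" by simp
qed

lemma comp_closed:
  assumes "graph V E" "C \<in> components V E" "x \<in> C" "{x,y} \<in> E"
  shows "y \<in> C"
proof -
  have C: "C = (adj V E)\<^sup>* `` {x}" by (rule comp_rep[OF assms(2,3)])
  have "x \<in> V" "y \<in> V" using edge_in_V[OF assms(1,4)] by auto
  then have "(x,y) \<in> adj V E" using assms(4) unfolding adj_def by simp
  then have "(x,y) \<in> (adj V E)\<^sup>*" by (rule r_into_rtrancl)
  then show ?thesis using C by simp
qed

lemma comp_conn: "C \<in> components V E \<Longrightarrow> u \<in> C \<Longrightarrow> v \<in> C \<Longrightarrow> (u,v) \<in> (adj V E)\<^sup>*"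
  using comp_rep[of C V E u] by simp

lemma comp_disj: "C \<in> components V E \<Longrightarrow> C' \<in> components V E \<Longrightarrow> v \<in> C \<Longrightarrow> v \<in> C' \<Longrightarrow> C = C'"
  using comp_rep[of C V E v] comp_rep[of C' V E v] by simp

lemma comp_finite: "graph V E \<Longrightarrow> C \<in> components V E \<Longrightarrow> finite C"
  using comp_sub unfolding graph_def by (metis finite_subset)

lemma rtrancl_exit:
  assumes "(a,b) \<in> R\<^sup>*" "a \<in> S" "b \<notin> S"
  shows "\<exists>x y. (x,y) \<in> R \<and> x \<in> S \<and> y \<notin> S"
  using assms
proof (induction rule: rtrancl_induct)
  case base then show ?case by simp
next
  case (step y z)
  show ?case
  proof (cases "y \<in> S")
    case True then show ?thesis using step.hyps(2) step.prems(2) by blast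
  next
    case False then show ?thesis using step.IH step.prems(1) by blast
  qed
qed

lemma ham:
  assumes g: "graph V E" and md: "max_degree V E = 2" and C: "C \<in> components V E"
  obtains ws where "distinct ws" "set ws = C" "ws \<noteq> []"
    "\<forall>i. Suc i < length ws \<longrightarrow> {ws!i, ws!Suc i} \<in> E"
proof -
  define P where "P ws \<longleftrightarrow> distinct ws \<and> set ws \<subseteq> C \<and> ws \<noteq> [] \<and>
     (\<forall>i. Suc i < length ws \<longrightarrow> {ws!i, ws!Suc i} \<in> E)" for ws
  obtain u where "C = (adj V E)\<^sup>* `` {u}" using C unfolding components_def by blast
  then have uC: "u \<in> C" by blast
  have P1: "P [u]" unfolding P_def using uC by simp
  have fin: "finite C" using comp_finite g C by blast
  have bound: "\<forall>ys. P ys \<longrightarrow> length ys < card C + 1"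
  proof (intro allI impI)
    fix ys assume "P ys"
    then have "card (set ys) \<le> card C" using fin unfolding P_def by (intro card_mono) auto
    then show "length ys < card C + 1" using \<open>P ys\<close> unfolding P_def by (simp add: distinct_card)
  qed
  obtain ws where ws: "P ws" and max: "\<forall>ys. P ys \<longrightarrow> length ys \<le> length ws"
    using ex_has_greatest_nat[of P "[u]" length "card C + 1"] P1 bound by blast
  have dw: "distinct ws" and sw: "set ws \<subseteq> C" and nw: "ws \<noteq> []"
    and cw: "\<forall>i. Suc i < length ws \<longrightarrow> {ws!i, ws!Suc i} \<in> E" using ws unfolding P_def by auto
  have "set ws = C"
  proof (rule ccontr)
    assume "set ws \<noteq> C"
    then obtain v where v: "v \<in> C" "v \<notin> set ws" using sw by blast
    have w0: "ws!0 \<in> set ws" using nw by simp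
    have "(ws!0, v) \<in> (adj V E)\<^sup>*" using comp_conn[OF C] w0 sw v(1) by blast
    then obtain x y where xy: "(x,y) \<in> adj V E" "x \<in> set ws" "y \<notin> set ws"
      using rtrancl_exit[of "ws!0" v _ "set ws"] w0 v(2) by blast
    have exy: "{x,y} \<in> E" using xy(1) unfolding adj_def by simp
    have yC: "y \<in> C" using comp_closed[OF g C _ exy] xy(2) sw by blast
    obtain i where i: "i < length ws" "ws!i = x" using xy(2) by (auto simp: in_set_conv_nth)
    show False
    proof (cases "Suc i = length ws")
      case True
      have "P (ws @ [y])" unfolding P_def
      proof (intro conjI allI impI)
        show "distinct (ws @ [y])" using dw xy(3) by simp
        show "set (ws @ [y]) \<subseteq> C" using sw yC by simp
        show "ws @ [y] \<noteq> []" by simp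
        fix m assume m: "Suc m < length (ws @ [y])"
        show "{(ws @ [y]) ! m, (ws @ [y]) ! Suc m} \<in> E"
        proof (cases "Suc m < length ws")
          case True then show ?thesis using cw by (simp add: nth_append)
        next
          case False
          then have "m = i" using m True by simp
          then show ?thesis using True i exy by (simp add: nth_append)
        qed
      qed
      then show False using max by fastforce
    next
      case False
      note si = False
      show False
      proof (cases "i = 0")
        case True
        have "P (y # ws)" unfolding P_def
        proof (intro conjI allI impI)
          show "distinct (y # ws)" using dw xy(3) by simp
          show "set (y # ws) \<subseteq> C" using sw yC by simp
          show "y # ws \<noteq> []" by simp
          fix m assume m: "Suc m < length (y # ws)"
          show "{(y # ws) ! m, (y # ws) ! Suc m} \<in> E"
          proof (cases m)
            case 0 then show ?thesis using True i exy by (simp add: insert_commute)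
          next
            case (Suc m') then show ?thesis using cw m by simp
          qed
        qed
        then show False using max by fastforce
      next
        case False
        have si2: "Suc i < length ws" using si i by simp
        have e1: "{ws!(i-1), ws!i} \<in> E" using cw[rule_format, of "i-1"] False i by simp
        have e2: "{ws!(Suc i), ws!i} \<in> E" using cw[rule_format, of i] si2 by (simp add: insert_commute)
        have e3: "{y, ws!i} \<in> E" using exy i by (simp add: insert_commute)
        have d: "ws!(i-1) \<noteq> ws!(Suc i)" using dw si2 by (simp add: nth_eq_iff_index_eq)
        have d2: "ws!(i-1) \<noteq> y" "ws!(Suc i) \<noteq> y" using xy(3) si2 i by auto
        have "ws!i \<in> V" using i sw comp_sub[OF C] by (meson nth_mem subsetD)
        then show False using no_three[OF g md _ e1 e2 e3] d d2 by blast
      qed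
    qed
  qed
  then show ?thesis using that dw nw cw by blast
qed

lemma ham_edges:
  assumes g: "graph V E" and md: "max_degree V E = 2" and dw: "distinct ws" and sw: "set ws \<subseteq> V"
    and cw: "\<forall>i. Suc i < length ws \<longrightarrow> {ws!i, ws!Suc i} \<in> E"
    and ij: "i < j" "j < length ws" "{ws!i, ws!j} \<in> E" "j \<noteq> Suc i"
  shows "i = 0 \<and> j = length ws - 1"
proof
  have sij: "Suc i < j" using ij by simp
  show i0: "i = 0"
  proof (rule ccontr)
    assume "i \<noteq> 0"
    have e1: "{ws!(i-1), ws!i} \<in> E" using cw[rule_format, of "i-1"] \<open>i \<noteq> 0\<close> ij by simp
    have e2: "{ws!(Suc i), ws!i} \<in> E" using cw[rule_format, of i] sij ij by (simp add: insert_commute)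
    have e3: "{ws!j, ws!i} \<in> E" using ij by (simp add: insert_commute)
    have d: "ws!(i-1) \<noteq> ws!(Suc i)" "ws!(i-1) \<noteq> ws!j" "ws!(Suc i) \<noteq> ws!j"
      using dw sij ij by (auto simp: nth_eq_iff_index_eq)
    have "ws!i \<in> V" using ij sw by auto
    then show False using no_three[OF g md _ e1 e2 e3] d by blast
  qed
  show "j = length ws - 1"
  proof (rule ccontr)
    assume "j \<noteq> length ws - 1"
    then have sj: "Suc j < length ws" using ij by simp
    have e1: "{ws!(j-1), ws!j} \<in> E" using cw[rule_format, of "j-1"] sij ij by simp
    have e2: "{ws!(Suc j), ws!j} \<in> E" using cw[rule_format, of j] sj by (simp add: insert_commute)
    have e3: "{ws!i, ws!j} \<in> E" using ij by simp
    have jl: "j - 1 < length ws" "0 < length ws" "j - 1 \<noteq> 0" "j - 1 \<noteq> Suc j" using sij sj by auto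
    have d: "ws!(j-1) \<noteq> ws!(Suc j)" "ws!(j-1) \<noteq> ws!i" "ws!(Suc j) \<noteq> ws!i"
      using dw sj jl i0 by (simp_all add: nth_eq_iff_index_eq)
    have "ws!j \<in> V" using ij sw by auto
    then show False using no_three[OF g md _ e1 e2 e3] d by blast
  qed
qed

lemma ham_char:
  assumes g: "graph V E" and md: "max_degree V E = 2" and dw: "distinct ws" and sw: "set ws \<subseteq> V"
    and cw: "\<forall>i. Suc i < length ws \<longrightarrow> {ws!i, ws!Suc i} \<in> E"
    and ij: "i < length ws" "j < length ws"
  shows "{ws!i, ws!j} \<in> E \<longleftrightarrow> (j = Suc i \<or> i = Suc j \<or>
           ({i,j} = {0, length ws - 1} \<and> {ws!0, ws!(length ws - 1)} \<in> E))"
proof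
  assume e: "{ws!i, ws!j} \<in> E"
  have "i \<noteq> j" using e edge_neq[OF g] by blast
  then consider "i < j" | "j < i" by linarith
  then show "j = Suc i \<or> i = Suc j \<or> ({i,j} = {0, length ws - 1} \<and> {ws!0, ws!(length ws - 1)} \<in> E)"
  proof cases
    case 1
    show ?thesis
    proof (cases "j = Suc i")
      case False
      then have "i = 0 \<and> j = length ws - 1" using ham_edges[OF g md dw sw cw 1 ij(2) e] by blast
      then show ?thesis using e by auto
    qed simp
  next
    case 2
    have e': "{ws!j, ws!i} \<in> E" using e by (simp add: insert_commute)
    show ?thesis
    proof (cases "i = Suc j")
      case False
      then have "j = 0 \<and> i = length ws - 1" using ham_edges[OF g md dw sw cw 2 ij(1) e'] by blast
      then show ?thesis using e' by auto
    qed simp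
  qed
next
  assume h: "j = Suc i \<or> i = Suc j \<or> ({i,j} = {0, length ws - 1} \<and> {ws!0, ws!(length ws - 1)} \<in> E)"
  then consider "j = Suc i" | "i = Suc j" | "i = 0" "j = length ws - 1" "{ws!0, ws!(length ws - 1)} \<in> E"
     | "j = 0" "i = length ws - 1" "{ws!0, ws!(length ws - 1)} \<in> E"
    by (auto simp: doubleton_eq_iff)
  then show "{ws!i, ws!j} \<in> E"
  proof cases
    case 1 then show ?thesis using cw ij by simp
  next
    case 2 then show ?thesis using cw ij by (simp add: insert_commute)
  next
    case 3 then show ?thesis by simp
  next
    case 4 then show ?thesis by (simp add: insert_commute)
  qed
qed

lemma nth_bij: "distinct ws \<Longrightarrow> bij_betw ((!) ws) {0..<length ws} (set ws)"
  unfolding bij_betw_def using inj_on_nth[of ws "{0..<length ws}"] nth_image[of "length ws" ws] by simp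

definition cycdata :: "'a set set \<Rightarrow> 'a set \<Rightarrow> 'a list \<Rightarrow> bool" where
  "cycdata E C ws \<longleftrightarrow> distinct ws \<and> set ws = C \<and> 3 \<le> length ws \<and>
     (\<forall>i<length ws. \<forall>j<length ws. {ws!i, ws!j} \<in> E \<longleftrightarrow>
        (j = Suc i mod length ws \<or> i = Suc j mod length ws))"

lemma comp_cases:
  assumes g: "graph V E" and md: "max_degree V E = 2" and C: "C \<in> components V E"
  shows "is_path_component V E C \<or> (\<exists>ws. cycdata E C ws \<and> is_cycle_component V E C)"
proof -
  obtain ws where dw: "distinct ws" and sw: "set ws = C" and nw: "ws \<noteq> []"
    and cw: "\<forall>i. Suc i < length ws \<longrightarrow> {ws!i, ws!Suc i} \<in> E"
    by (rule ham[OF g md C])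
  define n where "n = length ws"
  have swV: "set ws \<subseteq> V" using sw comp_sub[OF C] by simp
  have cardC: "card C = n" using distinct_card[OF dw] sw unfolding n_def by simp
  have bij: "bij_betw ((!) ws) {0..<n} C" using nth_bij[OF dw] sw n_def by simp
  have char: "\<And>i j. i < n \<Longrightarrow> j < n \<Longrightarrow> {ws!i, ws!j} \<in> E \<longleftrightarrow> (j = Suc i \<or> i = Suc j \<or>
           ({i,j} = {0, n - 1} \<and> {ws!0, ws!(n - 1)} \<in> E))"
    unfolding n_def by (rule ham_char[OF g md dw swV cw])
  show ?thesis
  proof (cases "3 \<le> n \<and> {ws!0, ws!(n - 1)} \<in> E")
    case True
    have rel: "\<forall>i<n. \<forall>j<n. {ws!i, ws!j} \<in> E \<longleftrightarrow> (j = Suc i mod n \<or> i = Suc j mod n)"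
    proof (intro allI impI)
      fix i j assume ij: "i < n" "j < n"
      show "{ws!i, ws!j} \<in> E \<longleftrightarrow> (j = Suc i mod n \<or> i = Suc j mod n)"
        using char[OF ij] cyc_rel_iff[OF ij] True by argo
    qed
    have "graph_iso C (induced E C) (cycle_V n) (cycle_E n)"
      unfolding cycle_V_def
    proof (rule iso_build[OF bij], intro ballI)
      fix s t assume "s \<in> {0..<n}" "t \<in> {0..<n}"
      then have st: "s < n" "t < n" by auto
      show "{ws!s, ws!t} \<in> E \<longleftrightarrow> {s,t} \<in> cycle_E n" using rel[rule_format, OF st] cycle_E_iff[OF st] by argo
    qed
    then have "is_cycle_component V E C" unfolding is_cycle_component_def using C cardC True by simp
    moreover have "3 \<le> length ws" using True n_def by simp
    moreover have "cycdata E C ws" unfolding cycdata_def using dw sw \<open>3 \<le> length ws\<close> rel unfolding n_def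
      by (intro conjI) assumption+
    ultimately show ?thesis by auto
  next
    case False
    have rel: "\<forall>i<n. \<forall>j<n. {ws!i, ws!j} \<in> E \<longleftrightarrow> (j = Suc i \<or> i = Suc j)"
    proof (intro allI impI)
      fix i j assume ij: "i < n" "j < n"
      have "({i,j} = {0, n - 1} \<and> {ws!0, ws!(n - 1)} \<in> E) \<Longrightarrow> (j = Suc i \<or> i = Suc j)"
      proof -
        assume h: "{i,j} = {0, n - 1} \<and> {ws!0, ws!(n - 1)} \<in> E"
        then have cl: "{ws!0, ws!(n - 1)} \<in> E" by simp
        then have n2: "n < 3" using False by simp
        have "n \<noteq> 1"
        proof
          assume "n = 1"
          then have "{ws!0, ws!0} \<in> E" using h by simp
          then show False using edge_neq[OF g, of "ws!0" "ws!0"] by simp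
        qed
        moreover have "n \<noteq> 0" using nw n_def by simp
        ultimately have "n = 2" using n2 by presburger
        then have "{i,j} = {0,1}" using h by simp
        then have "(i = 0 \<and> j = 1) \<or> (i = 1 \<and> j = 0)" by (simp add: doubleton_eq_iff)
        then show ?thesis by auto
      qed
      then show "{ws!i, ws!j} \<in> E \<longleftrightarrow> (j = Suc i \<or> i = Suc j)" using char[OF ij] by argo
    qed
    have "graph_iso C (induced E C) (path_V n) (path_E n)"
      unfolding path_V_def
    proof (rule iso_build[OF bij], intro ballI)
      fix s t assume "s \<in> {0..<n}" "t \<in> {0..<n}"
      then have st: "s < n" "t < n" by auto
      show "{ws!s, ws!t} \<in> E \<longleftrightarrow> {s,t} \<in> path_E n" using rel[rule_format, OF st] path_E_iff[OF st] by argo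
    qed
    then have "is_path_component V E C" unfolding is_path_component_def using C cardC by simp
    then show ?thesis by simp
  qed
qed

lemma dir:
  fixes a :: "nat \<Rightarrow> nat"
  assumes inj: "inj_on a {0..<k}" and rng: "\<forall>t<k. a t < n"
    and rel: "\<forall>s<k. \<forall>t<k. (t = Suc s \<or> s = Suc t) \<longleftrightarrow> (a t = Suc (a s) mod n \<or> a s = Suc (a t) mod n)"
  shows "(\<forall>t. Suc t < k \<longrightarrow> a (Suc t) = Suc (a t) mod n) \<or> (\<forall>t. Suc t < k \<longrightarrow> a t = Suc (a (Suc t)) mod n)"
proof (cases "k \<le> 1")
  case True then show ?thesis by auto
next
  case False
  have step: "\<And>t. Suc t < k \<Longrightarrow> a (Suc t) = Suc (a t) mod n \<or> a t = Suc (a (Suc t)) mod n"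
  proof -
    fix t assume "Suc t < k"
    then have "t < k" by simp
    then show "a (Suc t) = Suc (a t) mod n \<or> a t = Suc (a (Suc t)) mod n"
      using rel[rule_format, OF \<open>t < k\<close> \<open>Suc t < k\<close>] by simp
  qed
  have noeq: "\<And>t. Suc (Suc t) < k \<Longrightarrow> a t \<noteq> a (Suc (Suc t))"
  proof
    fix t assume t: "Suc (Suc t) < k" "a t = a (Suc (Suc t))"
    then have "t = Suc (Suc t)" using inj_onD[OF inj t(2)] t(1) by simp
    then show False by simp
  qed
  have "a (Suc 0) = Suc (a 0) mod n \<or> a 0 = Suc (a (Suc 0)) mod n" using step[of 0] False by simp
  then show ?thesis
  proof
    assume 1: "a (Suc 0) = Suc (a 0) mod n"
    have "\<forall>t. Suc t < k \<longrightarrow> a (Suc t) = Suc (a t) mod n"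
    proof (intro allI)
      fix t show "Suc t < k \<longrightarrow> a (Suc t) = Suc (a t) mod n"
      proof (induction t)
        case 0 then show ?case using 1 by simp
      next
        case (Suc t)
        show ?case
        proof
          assume st: "Suc (Suc t) < k"
          have ih: "a (Suc t) = Suc (a t) mod n" using Suc st by simp
          show "a (Suc (Suc t)) = Suc (a (Suc t)) mod n"
          proof (rule ccontr)
            assume "a (Suc (Suc t)) \<noteq> Suc (a (Suc t)) mod n"
            then have "a (Suc t) = Suc (a (Suc (Suc t))) mod n" using step[OF st] by argo
            then have eq: "Suc (a t) mod n = Suc (a (Suc (Suc t))) mod n" using ih by simp
            have b1: "a t < n" "a (Suc (Suc t)) < n" using rng st by simp_all
            have "a t = a (Suc (Suc t))" by (rule suc_mod_inj[OF b1 eq])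
            then show False using noeq[OF st] by simp
          qed
        qed
      qed
    qed
    then show ?thesis by (rule disjI1)
  next
    assume 2: "a 0 = Suc (a (Suc 0)) mod n"
    have "\<forall>t. Suc t < k \<longrightarrow> a t = Suc (a (Suc t)) mod n"
    proof (intro allI)
      fix t show "Suc t < k \<longrightarrow> a t = Suc (a (Suc t)) mod n"
      proof (induction t)
        case 0 then show ?case using 2 by simp
      next
        case (Suc t)
        show ?case
        proof
          assume st: "Suc (Suc t) < k"
          have ih: "a t = Suc (a (Suc t)) mod n" using Suc st by simp
          show "a (Suc t) = Suc (a (Suc (Suc t))) mod n"
          proof (rule ccontr)
            assume "a (Suc t) \<noteq> Suc (a (Suc (Suc t))) mod n"
            then have "a (Suc (Suc t)) = Suc (a (Suc t)) mod n" using step[OF st] by argo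
            then have "a t = a (Suc (Suc t))" using ih by simp
            then show False using noeq[OF st] by simp
          qed
        qed
      qed
    qed
    then show ?thesis by (rule disjI2)
  qed
qed

lemma fwd_form:
  fixes c :: "nat \<Rightarrow> nat"
  assumes c0: "c 0 < n" and fwd: "\<forall>t. Suc t < k \<longrightarrow> c (Suc t) = Suc (c t) mod n"
  shows "\<forall>t<k. c t = (c 0 + t) mod n"
proof (intro allI)
  fix t show "t < k \<longrightarrow> c t = (c 0 + t) mod n"
  proof (induction t)
    case 0 then show ?case using c0 by simp
  next
    case (Suc t)
    show ?case
    proof
      assume "Suc t < k"
      then have "c (Suc t) = Suc ((c 0 + t) mod n) mod n" using fwd Suc by simp
      also have "\<dots> = (c 0 + Suc t) mod n" by (simp add: mod_Suc_eq)
      finally show "c (Suc t) = (c 0 + Suc t) mod n" .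
    qed
  qed
qed

lemma fwd_lt:
  fixes c :: "nat \<Rightarrow> nat"
  assumes c0: "c 0 < n" and fwd: "\<forall>t. Suc t < k \<longrightarrow> c (Suc t) = Suc (c t) mod n"
    and rel: "\<forall>s<k. \<forall>t<k. (t = Suc s \<or> s = Suc t) \<longleftrightarrow> (c t = Suc (c s) mod n \<or> c s = Suc (c t) mod n)"
    and k: "0 < k" "k \<le> n" "3 \<le> n"
  shows "k < n"
proof (rule ccontr)
  assume "\<not> k < n"
  then have kn: "k = n" using k by simp
  have f: "\<forall>t<k. c t = (c 0 + t) mod n" by (rule fwd_form[OF c0 fwd])
  have "k - 1 < k" using k by simp
  then have "c (k - 1) = (c 0 + (k - 1)) mod n" using f by blast
  then have "c (k - 1) = (c 0 + (n - 1)) mod n" using kn by simp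
  then have "Suc (c (k - 1)) mod n = Suc (c 0 + (n - 1)) mod n" by (simp add: mod_Suc_eq)
  also have "\<dots> = (c 0 + n) mod n" using k by (simp add: Suc_diff_le)
  also have "\<dots> = c 0" using c0 by simp
  finally have "c 0 = Suc (c (k - 1)) mod n" by simp
  moreover have "k - 1 < k" using k by simp
  ultimately have "0 = Suc (k - 1) \<or> k - 1 = Suc 0" using rel[rule_format, of "k - 1" 0] k by argo
  then show False using k kn by simp
qed

lemma rev_img: "(\<lambda>t. f (k - 1 - t)) ` {0..<k} = f ` {0..<(k::nat)}"
proof
  show "(\<lambda>t. f (k - 1 - t)) ` {0..<k} \<subseteq> f ` {0..<k}" by auto
  show "f ` {0..<k} \<subseteq> (\<lambda>t. f (k - 1 - t)) ` {0..<k}"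
  proof
    fix x assume "x \<in> f ` {0..<k}"
    then obtain t where t: "t < k" "x = f t" by auto
    then have "x = f (k - 1 - (k - 1 - t))" by simp
    moreover have "k - 1 - t \<in> {0..<k}" using t by simp
    ultimately show "x \<in> (\<lambda>t. f (k - 1 - t)) ` {0..<k}" by (rule image_eqI[where x="k - 1 - t"])
  qed
qed

definition arc :: "'a list \<Rightarrow> nat \<Rightarrow> nat \<Rightarrow> 'a set" where
  "arc ws k j = (\<lambda>t. ws ! ((j + t) mod length ws)) ` {0..<k}"

lemma cycdata_rel:
  assumes "cycdata E C ws" "i < length ws" "j < length ws"
  shows "{ws!i, ws!j} \<in> E \<longleftrightarrow> (j = Suc i mod length ws \<or> i = Suc j mod length ws)"
  using assms unfolding cycdata_def by simp

lemma arc_iso: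
  assumes cd: "cycdata E C ws" and kn: "k < length ws"
  shows "arc ws k j \<subseteq> C \<and> graph_iso (arc ws k j) (induced E (arc ws k j)) (path_V k) (path_E k)"
proof -
  define n where "n = length ws"
  have dw: "distinct ws" and sw: "set ws = C" and n3: "3 \<le> n" using cd unfolding cycdata_def n_def by auto
  have n0: "0 < n" using n3 by simp
  define g where "g t = ws ! ((j + t) mod n)" for t
  have idx: "\<And>t. (j + t) mod n < n" using n0 by simp
  have inj: "inj_on g {0..<k}"
  proof (rule inj_onI)
    fix s t assume st: "s \<in> {0..<k}" "t \<in> {0..<k}" and e: "g s = g t"
    have "(j + s) mod n = (j + t) mod n"
      using e nth_eq_iff_index_eq[OF dw, of "(j + s) mod n" "(j + t) mod n"] idx n_def unfolding g_def by simp
    moreover have "s < n" "t < n" using st kn n_def by auto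
    ultimately show "s = t" using add_mod_cancel by blast
  qed
  have arcg: "arc ws k j = g ` {0..<k}" unfolding arc_def g_def n_def by simp
  have bij: "bij_betw g {0..<k} (arc ws k j)" unfolding arcg bij_betw_def using inj by simp
  have sub: "arc ws k j \<subseteq> C" unfolding arcg g_def using sw idx n_def by auto
  have "graph_iso (arc ws k j) (induced E (arc ws k j)) {0..<k} (path_E k)"
  proof (rule iso_build[OF bij], intro ballI)
    fix s t assume "s \<in> {0..<k}" "t \<in> {0..<k}"
    then have st: "s < k" "t < k" by auto
    have sn: "Suc s < n" "Suc t < n" "s < n" "t < n" using st kn n_def by auto
    have "{g s, g t} \<in> E \<longleftrightarrow> ((j + t) mod n = Suc ((j + s) mod n) mod n \<or> (j + s) mod n = Suc ((j + t) mod n) mod n)"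
      unfolding g_def using cycdata_rel[OF cd, of "(j + s) mod n" "(j + t) mod n"] idx n_def by simp
    also have "\<dots> \<longleftrightarrow> ((j + t) mod n = (j + Suc s) mod n \<or> (j + s) mod n = (j + Suc t) mod n)"
      by (simp add: mod_Suc_eq)
    also have "\<dots> \<longleftrightarrow> (t = Suc s \<or> s = Suc t)"
      using add_mod_cancel[of t n "Suc s" j] add_mod_cancel[of s n "Suc t" j] sn by simp
    also have "\<dots> \<longleftrightarrow> {s, t} \<in> path_E k" using path_E_iff[OF st] by simp
    finally show "{g s, g t} \<in> E \<longleftrightarrow> {s, t} \<in> path_E k" .
  qed
  then show ?thesis using sub unfolding path_V_def by simp
qed

lemma idx_inj:
  fixes j j' k n :: nat
  assumes jn: "j < n" "j' < n" and k: "0 < k" "k < n"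
    and eq: "(\<lambda>t. (j + t) mod n) ` {0..<k} = (\<lambda>t. (j' + t) mod n) ` {0..<k}"
  shows "j = j'"
proof -
  have "j \<in> (\<lambda>t. (j + t) mod n) ` {0..<k}"
  proof (rule image_eqI[where x=0])
    show "j = (j + 0) mod n" using jn by simp
    show "0 \<in> {0..<k}" using k by simp
  qed
  then have "j \<in> (\<lambda>t. (j' + t) mod n) ` {0..<k}" using eq by simp
  then obtain t where t: "t < k" "j = (j' + t) mod n" by auto
  show ?thesis
  proof (cases "t = 0")
    case True then show ?thesis using t jn by simp
  next
    case False
    define p where "p = (j' + (t - 1)) mod n"
    have "p \<in> (\<lambda>t. (j' + t) mod n) ` {0..<k}" unfolding p_def using t by auto
    then have "p \<in> (\<lambda>t. (j + t) mod n) ` {0..<k}" using eq by simp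
    then obtain s where s: "s < k" "p = (j + s) mod n" by auto
    have "Suc p mod n = Suc (j' + (t - 1)) mod n" unfolding p_def by (simp add: mod_Suc_eq)
    also have "\<dots> = (j' + t) mod n" using False by simp
    finally have 1: "Suc p mod n = j" using t by simp
    have "Suc p mod n = (j + Suc s) mod n" using s by (simp add: mod_Suc_eq)
    then have "(j + Suc s) mod n = (j + 0) mod n" using 1 jn by simp
    moreover have "Suc s < n" "0 < n" using s k by auto
    ultimately have "Suc s = 0" using add_mod_cancel[of "Suc s" n 0 j] by simp
    then show ?thesis by simp
  qed
qed

lemma arc_inj:
  assumes cd: "cycdata E C ws" and k: "0 < k" "k < length ws"
  shows "inj_on (arc ws k) {0..<length ws}"
proof (rule inj_onI)
  define n where "n = length ws"
  have dw: "distinct ws" using cd unfolding cycdata_def by simp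
  have n0: "0 < n" using k n_def by linarith
  fix j j' assume j: "j \<in> {0..<length ws}" "j' \<in> {0..<length ws}" and e: "arc ws k j = arc ws k j'"
  define I where "I x = (\<lambda>t. (x + t) mod n) ` {0..<k}" for x
  have aI: "arc ws k x = (!) ws ` I x" for x unfolding arc_def I_def n_def by (simp add: image_image)
  have Isub: "I x \<subseteq> {0..<n}" for x unfolding I_def using n0 by auto
  have injn: "inj_on ((!) ws) {0..<n}" using inj_on_nth[OF dw] n_def by simp
  have "I j = I j'" using e aI inj_on_image_eq_iff[OF injn Isub Isub] by simp
  then show "j = j'" using idx_inj[of j n j' k] j k n_def unfolding I_def by simp
qed

lemma sub_arc:
  assumes cd: "cycdata E C ws" and k0: "0 < k" and XC: "X \<subseteq> C"
    and iso: "graph_iso X (induced E X) (path_V k) (path_E k)"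
  shows "k < length ws \<and> (\<exists>j<length ws. X = arc ws k j)"
proof -
  define n where "n = length ws"
  have dw: "distinct ws" and sw: "set ws = C" and n3: "3 \<le> n" using cd unfolding cycdata_def n_def by auto
  obtain g where gb: "bij_betw g {0..<k} X"
    and grel: "\<forall>s<k. \<forall>t<k. {g s, g t} \<in> E \<longleftrightarrow> (t = Suc s \<or> s = Suc t)"
    using iso_unpack[OF iso] by blast
  have gX: "g t \<in> set ws" if "t \<in> {0..<k}" for t
    using bij_betwE[OF gb] that XC sw by blast
  have "\<forall>t\<in>{0..<k}. \<exists>i. i < n \<and> ws ! i = g t"
    using gX unfolding n_def by (auto simp: in_set_conv_nth)
  then obtain a where a: "\<forall>t\<in>{0..<k}. a t < n \<and> ws ! (a t) = g t"
    using bchoice[of "{0..<k}" "\<lambda>t i. i < n \<and> ws ! i = g t"] by blast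
  have arng: "\<forall>t<k. a t < n" using a by simp
  have ag: "\<And>t. t < k \<Longrightarrow> ws ! (a t) = g t" using a by simp
  have cardX: "card X = k" using bij_betw_same_card[OF gb] by simp
  have kn: "k \<le> n"
  proof -
    have "card X \<le> card C" using XC sw by (intro card_mono) auto
    then show ?thesis using cardX sw distinct_card[OF dw] n_def by simp
  qed
  have arel: "\<forall>s<k. \<forall>t<k. (t = Suc s \<or> s = Suc t) \<longleftrightarrow> (a t = Suc (a s) mod n \<or> a s = Suc (a t) mod n)"
  proof (intro allI impI)
    fix s t assume st: "s < k" "t < k"
    have 1: "{g s, g t} \<in> E \<longleftrightarrow> (t = Suc s \<or> s = Suc t)" using grel st by simp
    have 2: "{ws ! (a s), ws ! (a t)} \<in> E \<longleftrightarrow> (a t = Suc (a s) mod n \<or> a s = Suc (a t) mod n)"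
      using cycdata_rel[OF cd, of "a s" "a t"] arng st n_def by simp
    have 3: "{ws ! (a s), ws ! (a t)} = {g s, g t}" using ag st by simp
    show "(t = Suc s \<or> s = Suc t) \<longleftrightarrow> (a t = Suc (a s) mod n \<or> a s = Suc (a t) mod n)"
      using 1 2 3 by simp
  qed
  have ainj: "inj_on a {0..<k}"
  proof (rule inj_onI)
    fix s t assume st: "s \<in> {0..<k}" "t \<in> {0..<k}" "a s = a t"
    then have "g s = g t" using ag by (metis atLeastLessThan_iff)
    then show "s = t" using bij_betw_imp_inj_on[OF gb] st(1,2) by (simp add: inj_on_def)
  qed
  have Xa: "X = (\<lambda>t. ws ! (a t)) ` {0..<k}"
  proof -
    have "X = g ` {0..<k}" using bij_betw_imp_surj_on[OF gb] by simp
    also have "\<dots> = (\<lambda>t. ws ! (a t)) ` {0..<k}" using ag by (intro image_cong) auto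
    finally show ?thesis .
  qed
  have n3': "3 \<le> n" by (rule n3)
  from dir[OF ainj arng arel] show ?thesis
  proof
    assume fwd: "\<forall>t. Suc t < k \<longrightarrow> a (Suc t) = Suc (a t) mod n"
    have a0: "a 0 < n" using arng k0 by simp
    have kl: "k < n" by (rule fwd_lt[OF a0 fwd arel k0 kn n3])
    have f: "\<forall>t<k. a t = (a 0 + t) mod n" by (rule fwd_form[OF a0 fwd])
    have f': "ws ! (a t) = ws ! ((a 0 + t) mod n)" if "t \<in> {0..<k}" for t
    proof -
      have "t < k" using that by simp
      then have "a t = (a 0 + t) mod n" using f by blast
      then show ?thesis by (rule arg_cong)
    qed
    have "X = (\<lambda>t. ws ! ((a 0 + t) mod n)) ` {0..<k}" unfolding Xa using f' by (rule image_cong[OF refl])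
    then have "X = arc ws k (a 0)" unfolding arc_def n_def by simp
    then show ?thesis using kl a0 n_def by auto
  next
    assume bwd: "\<forall>t. Suc t < k \<longrightarrow> a t = Suc (a (Suc t)) mod n"
    define b where "b t = a (k - 1 - t)" for t
    have b0: "b 0 < n" unfolding b_def using arng k0 by simp
    have bfwd: "\<forall>t. Suc t < k \<longrightarrow> b (Suc t) = Suc (b t) mod n"
    proof (intro allI impI)
      fix t assume t: "Suc t < k"
      define u where "u = k - 2 - t"
      have u: "Suc u < k" "k - 1 - Suc t = u" "k - 1 - t = Suc u" using t unfolding u_def by auto
      have "a u = Suc (a (Suc u)) mod n" using bwd[rule_format, OF u(1)] .
      then show "b (Suc t) = Suc (b t) mod n" unfolding b_def using u(2,3) by simp
    qed
    have brel: "\<forall>s<k. \<forall>t<k. (t = Suc s \<or> s = Suc t) \<longleftrightarrow> (b t = Suc (b s) mod n \<or> b s = Suc (b t) mod n)"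
    proof (intro allI impI)
      fix s t assume st: "s < k" "t < k"
      have 1: "k - 1 - s < k" "k - 1 - t < k" using st by auto
      have 2: "(k - 1 - t = Suc (k - 1 - s) \<or> k - 1 - s = Suc (k - 1 - t)) \<longleftrightarrow> (t = Suc s \<or> s = Suc t)"
        using st by arith
      have 3: "(k - 1 - t = Suc (k - 1 - s) \<or> k - 1 - s = Suc (k - 1 - t)) \<longleftrightarrow>
          (a (k - 1 - t) = Suc (a (k - 1 - s)) mod n \<or> a (k - 1 - s) = Suc (a (k - 1 - t)) mod n)"
        by (rule arel[rule_format, OF 1])
      show "(t = Suc s \<or> s = Suc t) \<longleftrightarrow> (b t = Suc (b s) mod n \<or> b s = Suc (b t) mod n)"
        unfolding b_def using 2 3 by argo
    qed
    have kl: "k < n" by (rule fwd_lt[OF b0 bfwd brel k0 kn n3])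
    have f: "\<forall>t<k. b t = (b 0 + t) mod n" by (rule fwd_form[OF b0 bfwd])
    have "X = (\<lambda>t. ws ! (a (k - 1 - t))) ` {0..<k}" unfolding Xa by (rule rev_img[symmetric])
    also have "\<dots> = (\<lambda>t. ws ! (b t)) ` {0..<k}" unfolding b_def by simp
    also have "\<dots> = (\<lambda>t. ws ! ((b 0 + t) mod n)) ` {0..<k}"
    proof (rule image_cong[OF refl])
      fix t assume "t \<in> {0..<k}"
      then have "t < k" by simp
      then have "b t = (b 0 + t) mod n" using f by blast
      then show "ws ! (b t) = ws ! ((b 0 + t) mod n)" by (rule arg_cong)
    qed
    finally have "X = arc ws k (b 0)" unfolding arc_def n_def by simp
    then show ?thesis using kl b0 n_def by auto
  qed
qed

lemma X_in_comp:
  assumes g: "graph V E" and XV: "X \<subseteq> V" and iso: "graph_iso X (induced E X) (path_V k) (path_E k)"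
    and k0: "0 < k"
  shows "\<exists>C\<in>components V E. X \<subseteq> C"
proof -
  obtain f where gb: "bij_betw f {0..<k} X"
    and grel: "\<forall>s<k. \<forall>t<k. {f s, f t} \<in> E \<longleftrightarrow> (t = Suc s \<or> s = Suc t)"
    using iso_unpack[OF iso] by blast
  have f0: "f 0 \<in> V" using bij_betwE[OF gb] k0 XV by auto
  define C where "C = (adj V E)\<^sup>* `` {f 0}"
  have C: "C \<in> components V E" "f 0 \<in> C" using comp_self[OF f0] unfolding C_def by auto
  have "\<forall>t. t < k \<longrightarrow> f t \<in> C"
  proof
    fix t show "t < k \<longrightarrow> f t \<in> C"
    proof (induction t)
      case 0 then show ?case using C by simp
    next
      case (Suc t)
      show ?case
      proof
        assume st: "Suc t < k"
        then have "t < k" by simp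
        then have ft: "f t \<in> C" using Suc by simp
        have "{f t, f (Suc t)} \<in> E" using grel[rule_format, OF \<open>t < k\<close> st] by simp
        then show "f (Suc t) \<in> C" by (rule comp_closed[OF g C(1) ft])
      qed
    qed
  qed
  then have "X \<subseteq> C" using bij_betw_imp_surj_on[OF gb] by auto
  then show ?thesis using C by blast
qed

lemma card_iso: "graph_iso X (induced E X) (path_V k) (path_E k) \<Longrightarrow> card X = k"
proof -
  assume iso: "graph_iso X (induced E X) (path_V k) (path_E k)"
  obtain f where gb: "bij_betw f {0..<k} X" using iso_unpack[OF iso] by blast
  show ?thesis using bij_betw_same_card[OF gb] by simp
qed

lemma F1:
  assumes g: "graph V E" and md: "max_degree V E = 2" and k0: "0 < k"
    and np: "\<forall>C. is_path_component V E C \<longrightarrow> card C < k - 1"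
    and XV: "X \<subseteq> V" and iso: "graph_iso X (induced E X) (path_V k) (path_E k)"
  shows "\<exists>C\<in>components V E. X \<subseteq> C \<and> k < card C \<and> is_cycle_component V E C \<and> (\<exists>ws. cycdata E C ws)"
proof -
  obtain C where C: "C \<in> components V E" "X \<subseteq> C" using X_in_comp[OF g XV iso k0] by blast
  have cX: "card X = k" by (rule card_iso[OF iso])
  have "card X \<le> card C" using C comp_finite[OF g C(1)] by (intro card_mono) auto
  then have kC: "k \<le> card C" using cX by simp
  from comp_cases[OF g md C(1)] show ?thesis
  proof
    assume "is_path_component V E C"
    then have "card C < k - 1" using np by simp
    then show ?thesis using kC by simp
  next
    assume "\<exists>ws. cycdata E C ws \<and> is_cycle_component V E C"
    then obtain ws where cd: "cycdata E C ws" and cy: "is_cycle_component V E C" by blast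
    have "k < length ws" using sub_arc[OF cd k0 C(2) iso] by simp
    moreover have "card C = length ws" using cd distinct_card unfolding cycdata_def by metis
    ultimately show ?thesis using C cy cd by auto
  qed
qed

lemma F2:
  assumes cd: "cycdata E C ws" and CV: "C \<subseteq> V" and k0: "0 < k" and kn: "k < length ws"
  shows "card {X. (X \<subseteq> V \<and> graph_iso X (induced E X) (path_V k) (path_E k)) \<and> X \<subseteq> C} = card C"
proof -
  have eq: "{X. (X \<subseteq> V \<and> graph_iso X (induced E X) (path_V k) (path_E k)) \<and> X \<subseteq> C} = arc ws k ` {0..<length ws}"
  proof
    show "{X. (X \<subseteq> V \<and> graph_iso X (induced E X) (path_V k) (path_E k)) \<and> X \<subseteq> C} \<subseteq> arc ws k ` {0..<length ws}"
    proof
      fix X assume "X \<in> {X. (X \<subseteq> V \<and> graph_iso X (induced E X) (path_V k) (path_E k)) \<and> X \<subseteq> C}"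
      then have X: "X \<subseteq> C" "graph_iso X (induced E X) (path_V k) (path_E k)" by auto
      then obtain j where "j < length ws" "X = arc ws k j" using sub_arc[OF cd k0 X(1) X(2)] by blast
      then show "X \<in> arc ws k ` {0..<length ws}" by simp
    qed
    show "arc ws k ` {0..<length ws} \<subseteq> {X. (X \<subseteq> V \<and> graph_iso X (induced E X) (path_V k) (path_E k)) \<and> X \<subseteq> C}"
      using arc_iso[OF cd kn] CV by auto
  qed
  have "card (arc ws k ` {0..<length ws}) = length ws"
    using card_image[OF arc_inj[OF cd k0 kn]] by simp
  moreover have "card C = length ws" using cd distinct_card unfolding cycdata_def by metis
  ultimately show ?thesis using eq by simp
qed

theorem lemma4p4:
  fixes V :: "'a set" and E :: "'a set set" and k :: nat
  assumes "graph V E"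
    and "max_degree V E = 2"
    and "0 < k"
    and "\<forall>C. is_path_component V E C \<longrightarrow> card C < k - 1"
    and "0 < s_count V E (path_V k) (path_E k)"
    and "s_count V E (path_V k) (path_E k) \<le> 2 * k + 1"
  shows "\<exists>C\<in>components V E. k < card C
           \<and> (\<forall>C'\<in>components V E. k < card C' \<longrightarrow> C' = C)
           \<and> is_cycle_component V E C
           \<and> card C = s_count V E (path_V k) (path_E k)"
proof -
  note g = assms(1) and md = assms(2) and k0 = assms(3) and np = assms(4)
  define S where "S = {X. X \<subseteq> V \<and> graph_iso X (induced E X) (path_V k) (path_E k)}"
  have sc: "s_count V E (path_V k) (path_E k) = card S" unfolding s_count_def S_def by simp
  have finV: "finite V" using g unfolding graph_def by simp
  have "S \<subseteq> Pow V" unfolding S_def by auto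
  then have finS: "finite S" using finV by (simp add: finite_subset)
  have "S \<noteq> {}" using assms(5) sc by auto
  then obtain X0 where X0: "X0 \<in> S" by blast
  then have X0': "X0 \<subseteq> V" "graph_iso X0 (induced E X0) (path_V k) (path_E k)" unfolding S_def by auto
  obtain C where C: "C \<in> components V E" "X0 \<subseteq> C" "k < card C" "is_cycle_component V E C"
    and ws: "\<exists>ws. cycdata E C ws"
    using F1[OF g md k0 np X0'] by blast
  obtain ws where cd: "cycdata E C ws" using ws by blast
  have cardCws: "card C = length ws" using cd distinct_card unfolding cycdata_def by metis
  define SC where "SC D = {X. (X \<subseteq> V \<and> graph_iso X (induced E X) (path_V k) (path_E k)) \<and> X \<subseteq> D}" for D
  have SCS: "SC D \<subseteq> S" for D unfolding SC_def S_def by auto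
  have cSC: "card (SC C) = card C"
    unfolding SC_def using F2[OF cd comp_sub[OF C(1)] k0] C(3) cardCws by simp
  have uniq: "\<forall>C'\<in>components V E. k < card C' \<longrightarrow> C' = C"
  proof (intro ballI impI)
    fix C' assume C': "C' \<in> components V E" "k < card C'"
    show "C' = C"
    proof (rule ccontr)
      assume ne: "C' \<noteq> C"
      from comp_cases[OF g md C'(1)]
      obtain ws' where cd': "cycdata E C' ws'"
      proof
        assume "is_path_component V E C'"
        then have "card C' < k - 1" using np by simp
        then show ?thesis using C'(2) by simp
      next
        assume "\<exists>ws. cycdata E C' ws \<and> is_cycle_component V E C'"
        then show ?thesis using that by blast
      qed
      have cardC'ws: "card C' = length ws'" using cd' distinct_card unfolding cycdata_def by metis
      have cSC': "card (SC C') = card C'"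
        unfolding SC_def using F2[OF cd' comp_sub[OF C'(1)] k0] C'(2) cardC'ws by simp
      have disj: "C \<inter> C' = {}" using comp_disj[OF C(1) C'(1)] ne by blast
      have "SC C \<inter> SC C' = {}"
      proof (rule ccontr)
        assume "SC C \<inter> SC C' \<noteq> {}"
        then obtain X where X: "X \<in> SC C" "X \<in> SC C'" by blast
        then have "X \<subseteq> C \<inter> C'" unfolding SC_def by auto
        then have "X = {}" using disj by simp
        moreover have "card X = k" using X(1) card_iso unfolding SC_def by blast
        ultimately show False using k0 by simp
      qed
      then have "card (SC C \<union> SC C') = card (SC C) + card (SC C')"
        using finS SCS by (intro card_Un_disjoint) (auto intro: finite_subset)
      moreover have "card (SC C \<union> SC C') \<le> card S" using finS SCS by (intro card_mono) auto
      ultimately have "card C + card C' \<le> card S" using cSC cSC' by simp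
      then show False using C(3) C'(2) assms(6) sc by simp
    qed
  qed
  have "S = SC C"
  proof
    show "SC C \<subseteq> S" by (rule SCS)
    show "S \<subseteq> SC C"
    proof
      fix X assume X: "X \<in> S"
      then have X': "X \<subseteq> V" "graph_iso X (induced E X) (path_V k) (path_E k)" unfolding S_def by auto
      obtain D where D: "D \<in> components V E" "X \<subseteq> D" "k < card D"
        using F1[OF g md k0 np X'] by blast
      then have "D = C" using uniq by blast
      then show "X \<in> SC C" using D X' unfolding SC_def by simp
    qed
  qed
  then have "card C = s_count V E (path_V k) (path_E k)" using sc cSC by simp
  then show ?thesis using C uniq by blast
qed

end
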